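(* The robustness of activity $\mathsf A_r$ satisfies: (1) $\mathsf A_r(\rho)\in[0,d-1]$ for all $\rho\in\mathsf{St}(S)$, and the value $d-1$ is attained (e.g. by $\rho=|d\rangle\langle d|$); (2) $\mathsf A_r(\rho)=0$ if and only if $\rho\in\mathsf P(S)$; (3) $\mathsf A_r(p\rho_1+(1-p)\rho_2)\le p\,\mathsf A_r(\rho_1)+(1-p)\,\mathsf A_r(\rho_2)$ for all $p\in[0,1]$ and states $\rho_1,\rho_2$; (4) $\mathsf A_r(\mathcal C(\rho))\le\mathsf A_r(\rho)$ for every passivity-preserving channel $\mathcal C$ and every state $\rho$.
   Context: $S$ is a $d$-dimensional quantum system with non-degenerate Hamiltonian $H=\sum_i E_i|i\rangle\langle i|$, $E_1<\dots<E_d$. $\mathsf{St}(S)$ is the set of density matrices; $\mathsf P(S)$ is the set of passive states, i.e. states $\sum_i p_i|i\rangle\langle i|$ with $p_1\ge\dots\ge p_d$. The robustness of activity is $\mathsf A_r(\rho)=\min\{t\ge0:\ \exists\sigma\in\mathsf{St}(S)\text{ with }(\rho+t\sigma)/(1+t)\in\mathsf P(S)\}$. A channel $\mathcal C$ is passivity-preserving if $\mathcal C(\mathsf P(S))\subseteq\mathsf P(S)$. *)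

theory Defs
  imports Complex_Main
begin

text \<open>Operators on the d-dimensional system S are represented as functions
  nat => nat => complex giving the matrix entries in the energy eigenbasis
  |0>,...,|d-1> (0-based; paper's |i> is index i-1), ordered by increasing energy.\<close>

type_synonym cmat = "nat \<Rightarrow> nat \<Rightarrow> complex"

definition supported :: "nat \<Rightarrow> cmat \<Rightarrow> bool" where
  "supported d A \<longleftrightarrow> (\<forall>i j. \<not> (i < d \<and> j < d) \<longrightarrow> A i j = 0)"

definition hermitian :: "nat \<Rightarrow> cmat \<Rightarrow> bool" where
  "hermitian d A \<longleftrightarrow> (\<forall>i<d. \<forall>j<d. A i j = cnj (A j i))"

definition psd :: "nat \<Rightarrow> cmat \<Rightarrow> bool" where
  "psd d A \<longleftrightarrow> hermitian d A \<and>
     (\<forall>x :: nat \<Rightarrow> complex. 0 \<le> Re (\<Sum>i<d. \<Sum>j<d. cnj (x i) * A i j * x j))"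

definition trace :: "nat \<Rightarrow> cmat \<Rightarrow> complex" where
  "trace d A = (\<Sum>i<d. A i i)"

definition is_state :: "nat \<Rightarrow> cmat \<Rightarrow> bool" where
  "is_state d \<rho> \<longleftrightarrow> supported d \<rho> \<and> psd d \<rho> \<and> trace d \<rho> = 1"

definition passive_state :: "nat \<Rightarrow> cmat \<Rightarrow> bool" where
  "passive_state d \<rho> \<longleftrightarrow> is_state d \<rho> \<and> (\<forall>i j. i \<noteq> j \<longrightarrow> \<rho> i j = 0) \<and>
     (\<forall>i. Suc i < d \<longrightarrow> Re (\<rho> (Suc i) (Suc i)) \<le> Re (\<rho> i i))"

definition mix_t :: "cmat \<Rightarrow> real \<Rightarrow> cmat \<Rightarrow> cmat" where
  "mix_t \<rho> t \<sigma> = (\<lambda>i j. (\<rho> i j + complex_of_real t * \<sigma> i j) / complex_of_real (1 + t))"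

text \<open>Robustness of activity (the paper's min is rendered as Inf).\<close>
definition robustness_activity :: "nat \<Rightarrow> cmat \<Rightarrow> real" where
  "robustness_activity d \<rho> =
     Inf {t. 0 \<le> t \<and> (\<exists>\<sigma>. is_state d \<sigma> \<and> passive_state d (mix_t \<rho> t \<sigma>))}"

text \<open>Quantum channel on S (completely positive trace-preserving map), given by a
  Kraus representation: C(A) = sum_k K_k A K_k^dagger with sum_k K_k^dagger K_k = I.\<close>
definition channel :: "nat \<Rightarrow> (cmat \<Rightarrow> cmat) \<Rightarrow> bool" where
  "channel d C \<longleftrightarrow> (\<exists>(n::nat) (K :: nat \<Rightarrow> cmat).
     (\<forall>i<d. \<forall>j<d. (\<Sum>k<n. \<Sum>l<d. cnj (K k l i) * K k l j) = (if i = j then 1 else 0)) \<and>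
     (\<forall>A i j. C A i j =
        (if i < d \<and> j < d then (\<Sum>k<n. \<Sum>l<d. \<Sum>m<d. K k i l * A l m * cnj (K k j m)) else 0)))"

definition passivity_preserving :: "nat \<Rightarrow> (cmat \<Rightarrow> cmat) \<Rightarrow> bool" where
  "passivity_preserving d C \<longleftrightarrow> (\<forall>\<sigma>. passive_state d \<sigma> \<longrightarrow> passive_state d (C \<sigma>))"

text \<open>The pure state |d><d| (highest-energy eigenstate, index d-1).\<close>
definition top_state :: "nat \<Rightarrow> cmat" where
  "top_state d = (\<lambda>i j. if i = d - 1 \<and> j = d - 1 then 1 else 0)"

end

theory Submission
  imports Defs
begin


definition Q :: "nat \<Rightarrow> cmat \<Rightarrow> (nat \<Rightarrow> complex) \<Rightarrow> complex" where
  "Q d A x = (\<Sum>i<d. \<Sum>j<d. cnj (x i) * A i j * x j)"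

lemma sum_pick2:
  fixes f :: "nat \<Rightarrow> complex"
  assumes "i < d" "j < d" "i \<noteq> j"
  shows "(\<Sum>l<d. f l * (if l = i then a else if l = j then b else 0)) = f i * a + f j * b"
proof -
  have "(\<lambda>l. f l * (if l = i then a else if l = j then b else 0)) =
        (\<lambda>l. (if l = i then f l * a else 0) + (if l = j then f l * b else 0))"
    using assms by (auto intro!: ext)
  then show ?thesis unfolding \<open>_ = _\<close> using assms by (simp add: sum.distrib)
qed

lemma sum_pick2':
  fixes f :: "nat \<Rightarrow> complex"
  assumes "i < d" "j < d" "i \<noteq> j"
  shows "(\<Sum>l<d. cnj (if l = i then a else if l = j then b else 0) * f l) = cnj a * f i + cnj b * f j"
proof -
  have "(\<lambda>l. cnj (if l = i then a else if l = j then b else 0) * f l) =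
        (\<lambda>l. (if l = i then cnj a * f l else 0) + (if l = j then cnj b * f l else 0))"
    using assms by (auto intro!: ext)
  then show ?thesis unfolding \<open>_ = _\<close> using assms by (simp add: sum.distrib)
qed

lemma sum_pick1:
  fixes f :: "nat \<Rightarrow> complex"
  assumes "i < d"
  shows "(\<Sum>l<d. f l * (if l = i then a else 0)) = f i * a"
    "(\<Sum>l<d. cnj (if l = i then a else 0) * f l) = cnj a * f i"
proof -
  have e1: "(\<lambda>l. f l * (if l = i then a else 0)) = (\<lambda>l. if l = i then f l * a else 0)"
    by (auto intro!: ext)
  then show "(\<Sum>l<d. f l * (if l = i then a else 0)) = f i * a" unfolding e1 using assms by simp
  have e2: "(\<lambda>l. cnj (if l = i then a else 0) * f l) = (\<lambda>l. if l = i then cnj a * f l else 0)"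
    by (auto intro!: ext)
  then show "(\<Sum>l<d. cnj (if l = i then a else 0) * f l) = cnj a * f i" unfolding e2 using assms by simp
qed

lemma Q_two:
  assumes "i < d" "j < d" "i \<noteq> j"
  shows "Q d A (\<lambda>k. if k = i then a else if k = j then b else 0)
     = cnj a * A i i * a + cnj a * A i j * b + cnj b * A j i * a + cnj b * A j j * b"
proof -
  define x where "x = (\<lambda>k. if k = i then a else if k = j then b else (0::complex))"
  have inner: "(\<Sum>l<d. cnj (x k) * A k l * x l) = cnj (x k) * A k i * a + cnj (x k) * A k j * b" for k
    using sum_pick2[OF assms, of "\<lambda>l. cnj (x k) * A k l" a b] unfolding x_def by simp
  have "Q d A x = (\<Sum>k<d. cnj (x k) * (A k i * a + A k j * b))"
    unfolding Q_def inner by (simp add: algebra_simps)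
  also have "\<dots> = cnj a * (A i i * a + A i j * b) + cnj b * (A j i * a + A j j * b)"
    using sum_pick2'[OF assms, of a b "\<lambda>k. A k i * a + A k j * b"] unfolding x_def by simp
  finally show ?thesis unfolding x_def by (simp add: algebra_simps)
qed

lemma Q_one:
  assumes "i < d"
  shows "Q d A (\<lambda>k. if k = i then a else 0) = cnj a * A i i * a"
proof -
  define x where "x = (\<lambda>k. if k = i then a else (0::complex))"
  have inner: "(\<Sum>l<d. cnj (x k) * A k l * x l) = cnj (x k) * A k i * a" for k
    using sum_pick1(1)[OF assms, of "\<lambda>l. cnj (x k) * A k l" a] unfolding x_def by simp
  have "Q d A x = (\<Sum>k<d. cnj (x k) * (A k i * a))"
    unfolding Q_def inner by (simp add: algebra_simps)
  also have "\<dots> = cnj a * (A i i * a)"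
    using sum_pick1(2)[OF assms, of a "\<lambda>k. A k i * a"] unfolding x_def by simp
  finally show ?thesis unfolding x_def by (simp add: algebra_simps)
qed

lemma psd_Q: "psd d A \<Longrightarrow> 0 \<le> Re (Q d A x)"
  unfolding psd_def Q_def by blast

lemma psd_diag:
  assumes "psd d A" "i < d"
  shows "0 \<le> Re (A i i)" "Im (A i i) = 0" "A i i = complex_of_real (Re (A i i))"
proof -
  show "0 \<le> Re (A i i)" using psd_Q[OF assms(1), of "\<lambda>k. if k = i then 1 else 0"] Q_one[OF assms(2)] by simp
  have "A i i = cnj (A i i)" using assms unfolding psd_def hermitian_def by blast
  then show "Im (A i i) = 0" by (metis cnj.sel(2) neg_equal_zero)
  then show "A i i = complex_of_real (Re (A i i))" by (simp add: complex_eq_iff)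
qed

lemma cnj_mult_self: "cnj s * s = complex_of_real ((cmod s)^2)"
  by (metis complex_norm_square mult.commute)

lemma psd_minor:
  assumes "psd d A" "i < d" "j < d" "i \<noteq> j"
  shows "(cmod (A i j))^2 \<le> Re (A i i) * Re (A j j)"
proof -
  define s where "s = A i j"
  define \<alpha> where "\<alpha> = Re (A i i)"
  define \<beta> where "\<beta> = Re (A j j)"
  have hA: "A i i = of_real \<alpha>" "A j j = of_real \<beta>" unfolding \<alpha>_def \<beta>_def using psd_diag assms by auto
  have hs: "A j i = cnj s" unfolding s_def using assms unfolding psd_def hermitian_def
    by (metis complex_cnj_cnj)
  have a0: "0 \<le> \<alpha>" "0 \<le> \<beta>" unfolding \<alpha>_def \<beta>_def using psd_diag assms by auto
  have Qab: "0 \<le> Re (cnj a * of_real \<alpha> * a + cnj a * s * b + cnj b * cnj s * a + cnj b * of_real \<beta> * b)" for a b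
    using psd_Q[OF assms(1), of "\<lambda>k. if k = i then a else if k = j then b else 0"] Q_two[OF assms(2-4), of A a b]
    unfolding hA hs s_def by simp
  show ?thesis
  proof (cases "\<beta> = 0")
    case False
    then have bp: "\<beta> > 0" using a0 by auto
    have "cnj (of_real \<beta>) * of_real \<alpha> * of_real \<beta> + cnj (of_real \<beta>) * s * (- cnj s) + cnj (- cnj s) * cnj s * of_real \<beta> + cnj (- cnj s) * of_real \<beta> * (- cnj s)
       = of_real \<beta> * of_real \<beta> * of_real \<alpha> - of_real \<beta> * (cnj s * s)"
      by (simp add: algebra_simps)
    also have "\<dots> = of_real (\<beta> * \<beta> * \<alpha> - \<beta> * (cmod s)^2)" unfolding cnj_mult_self by simp
    finally have eq: "cnj (of_real \<beta>) * of_real \<alpha> * of_real \<beta> + cnj (of_real \<beta>) * s * (- cnj s) + cnj (- cnj s) * cnj s * of_real \<beta> + cnj (- cnj s) * of_real \<beta> * (- cnj s) = of_real (\<beta> * \<beta> * \<alpha> - \<beta> * (cmod s)^2)" .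
    have "0 \<le> \<beta> * \<beta> * \<alpha> - \<beta> * (cmod s)^2" using Qab[of "of_real \<beta>" "- cnj s"] unfolding eq by simp
    then have "0 \<le> \<beta> * (\<beta> * \<alpha> - (cmod s)^2)" by (simp add: algebra_simps)
    then have "0 \<le> \<beta> * \<alpha> - (cmod s)^2" using bp by (simp add: zero_le_mult_iff)
    then show ?thesis unfolding s_def \<alpha>_def \<beta>_def by (simp add: algebra_simps)
  next
    case True
    have "s = 0"
    proof (rule ccontr)
      assume "s \<noteq> 0"
      then have sp: "(cmod s)^2 > 0" by simp
      define r where "r = (\<alpha> + 1) / (cmod s)^2"
      have "cnj 1 * of_real \<alpha> * 1 + cnj 1 * s * (- of_real r * cnj s) + cnj (- of_real r * cnj s) * cnj s * 1 + cnj (- of_real r * cnj s) * of_real \<beta> * (- of_real r * cnj s)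
        = of_real \<alpha> - 2 * of_real r * (cnj s * s)" using True by (simp add: algebra_simps)
      also have "\<dots> = of_real (\<alpha> - 2 * r * (cmod s)^2)" unfolding cnj_mult_self by simp
      also have "r * (cmod s)^2 = \<alpha> + 1" unfolding r_def using sp by simp
      then have "\<alpha> - 2 * r * (cmod s)^2 = \<alpha> - 2 * (\<alpha> + 1)" by simp
      finally have eq: "cnj 1 * of_real \<alpha> * 1 + cnj 1 * s * (- of_real r * cnj s) + cnj (- of_real r * cnj s) * cnj s * 1 + cnj (- of_real r * cnj s) * of_real \<beta> * (- of_real r * cnj s) = of_real (\<alpha> - 2 * (\<alpha> + 1))" .
      have "0 \<le> \<alpha> - 2 * (\<alpha> + 1)" using Qab[of 1 "- of_real r * cnj s"] unfolding eq by simp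
      then show False using a0 by simp
    qed
    then show ?thesis using a0 unfolding s_def \<alpha>_def \<beta>_def True by simp
  qed
qed

lemma state_psd: "is_state d A \<Longrightarrow> psd d A" unfolding is_state_def by blast

lemma state_trace_re: "is_state d A \<Longrightarrow> (\<Sum>i<d. Re (A i i)) = 1"
  unfolding is_state_def trace_def by (metis Re_sum one_complex.simps(1))

lemma state_diag_le1:
  assumes "is_state d A" "i < d"
  shows "Re (A i i) \<le> 1"
proof -
  have "Re (A i i) \<le> (\<Sum>k<d. Re (A k k))"
    by (rule member_le_sum) (use assms psd_diag[OF state_psd[OF assms(1)]] in auto)
  then show ?thesis using state_trace_re[OF assms(1)] by simp
qed

lemma psd_minor_all:
  assumes "psd d A" "i < d" "j < d"
  shows "(cmod (A i j))^2 \<le> Re (A i i) * Re (A j j)"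
proof (cases "i = j")
  case True
  have "A i i = of_real (Re (A i i))" using psd_diag assms by auto
  then have "cmod (A i i) = \<bar>Re (A i i)\<bar>" by (metis norm_of_real)
  then show ?thesis using True by (simp add: power2_eq_square)
qed (use psd_minor assms in auto)

lemma state_entry_le1:
  assumes "is_state d A" "i < d" "j < d"
  shows "cmod (A i j) \<le> 1"
proof -
  have "(cmod (A i j))^2 \<le> Re (A i i) * Re (A j j)" using psd_minor_all state_psd assms by blast
  also have "\<dots> \<le> 1 * 1"
    using state_diag_le1[OF assms(1,2)] state_diag_le1[OF assms(1,3)]
      psd_diag(1)[OF state_psd[OF assms(1)] assms(2)] psd_diag(1)[OF state_psd[OF assms(1)] assms(3)]
    by (intro mult_mono) auto
  finally show ?thesis by (simp add: power_le_one_iff abs_le_square_iff)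
qed

lemma amgm_aux:
  fixes u P R :: real
  assumes "0 \<le> u" "0 \<le> P" "0 \<le> R" "u^2 \<le> P * R"
  shows "u \<le> (P + R) / 2"
proof -
  have e: "((P+R)/2)^2 - P*R = ((P-R)/2)^2" by (simp add: power2_eq_square field_simps)
  have "u^2 \<le> ((P + R)/2)^2" using e zero_le_power2[of "(P-R)/2"] assms(4) by linarith
  then show ?thesis by (rule power2_le_imp_le) (use assms in auto)
qed

lemma state_Q_bound:
  assumes "is_state d A"
  shows "Re (Q d A x) \<le> (\<Sum>i<d. (cmod (x i))^2)"
proof -
  let ?a = "\<lambda>i. Re (A i i)"
  let ?n = "\<lambda>i. cmod (x i)"
  have ps: "psd d A" using assms state_psd by blast
  have pt: "Re (cnj (x i) * A i j * x j) \<le> ((?n i)^2 * ?a j + (?n j)^2 * ?a i) / 2"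
    if "i < d" "j < d" for i j
  proof -
    have "Re (cnj (x i) * A i j * x j) \<le> cmod (cnj (x i) * A i j * x j)" by (rule complex_Re_le_cmod)
    also have "\<dots> = ?n i * cmod (A i j) * ?n j" by (simp add: norm_mult)
    also have "\<dots> \<le> ((?n i)^2 * ?a j + (?n j)^2 * ?a i) / 2"
    proof (rule amgm_aux)
      show "0 \<le> ?n i * cmod (A i j) * ?n j" by simp
      show "0 \<le> (?n i)^2 * ?a j" "0 \<le> (?n j)^2 * ?a i" using psd_diag[OF ps] that by auto
      have "(?n i * cmod (A i j) * ?n j)^2 = (?n i)^2 * (?n j)^2 * (cmod (A i j))^2"
        by (simp add: power_mult_distrib)
      also have "\<dots> \<le> (?n i)^2 * (?n j)^2 * (?a i * ?a j)"
        using psd_minor_all[OF ps that] by (intro mult_left_mono) auto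
      also have "\<dots> = (?n i)^2 * ?a j * ((?n j)^2 * ?a i)" by (simp add: algebra_simps)
      finally show "(?n i * cmod (A i j) * ?n j)^2 \<le> (?n i)^2 * ?a j * ((?n j)^2 * ?a i)" .
    qed
    finally show ?thesis .
  qed
  have "Re (Q d A x) = (\<Sum>i<d. \<Sum>j<d. Re (cnj (x i) * A i j * x j))" unfolding Q_def by simp
  also have "\<dots> \<le> (\<Sum>i<d. \<Sum>j<d. ((?n i)^2 * ?a j + (?n j)^2 * ?a i) / 2)"
    using pt by (intro sum_mono) auto
  also have "\<dots> = ((\<Sum>i<d. \<Sum>j<d. (?n i)^2 * ?a j) + (\<Sum>i<d. \<Sum>j<d. ?a i * (?n j)^2)) / 2"
    by (simp add: sum.distrib sum_divide_distrib add_divide_distrib mult.commute)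
  also have "\<dots> = ((\<Sum>i<d. (?n i)^2) * (\<Sum>j<d. ?a j) + (\<Sum>i<d. ?a i) * (\<Sum>j<d. (?n j)^2)) / 2"
    by (simp only: sum_product)
  also have "\<dots> = (\<Sum>i<d. (?n i)^2)" using state_trace_re[OF assms] by simp
  finally show ?thesis .
qed

lemma Q_cong: "(\<And>i j. i < d \<Longrightarrow> j < d \<Longrightarrow> A i j = B i j) \<Longrightarrow> Q d A x = Q d B x"
  unfolding Q_def by (intro sum.cong refl) auto

lemma Q_lin: "Q d (\<lambda>i j. a * A i j + b * B i j) x = a * Q d A x + b * Q d B x"
  unfolding Q_def by (simp add: sum.distrib sum_distrib_left algebra_simps)

lemma Q_id: "Q d (\<lambda>i j. if i = j then 1 else 0) x = of_real (\<Sum>i<d. (cmod (x i))^2)"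
proof -
  have "Q d (\<lambda>i j. if i = j then 1 else 0) x = (\<Sum>i<d. cnj (x i) * x i)"
    unfolding Q_def by (intro sum.cong refl) (simp add: if_distrib if_distribR cong: if_cong)
  also have "\<dots> = of_real (\<Sum>i<d. (cmod (x i))^2)" by (simp add: cnj_mult_self)
  finally show ?thesis .
qed

definition unif :: "nat \<Rightarrow> cmat" where
  "unif d = (\<lambda>i j. if i < d \<and> j < d \<and> i = j then 1 / of_nat d else 0)"

lemma unif_passive:
  assumes "1 \<le> d"
  shows "passive_state d (unif d)"
proof -
  have Qu: "Q d (unif d) x = (1 / of_nat d) * Q d (\<lambda>i j. if i = j then 1 else 0) x + 0 * Q d (\<lambda>i j. 0) x" for x
    unfolding Q_lin[symmetric] by (rule Q_cong) (simp add: unif_def)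
  have "0 \<le> Re (Q d (unif d) x)" for x unfolding Qu Q_id by (simp add: sum_nonneg)
  moreover have "hermitian d (unif d)" unfolding hermitian_def unif_def by simp
  moreover have "trace d (unif d) = 1" unfolding trace_def unif_def using assms by simp
  moreover have "supported d (unif d)" unfolding supported_def unif_def by auto
  ultimately show ?thesis
    unfolding passive_state_def is_state_def psd_def Q_def unif_def by auto
qed

definition Sset :: "nat \<Rightarrow> cmat \<Rightarrow> real set" where
  "Sset d \<rho> = {t. 0 \<le> t \<and> (\<exists>\<sigma>. is_state d \<sigma> \<and> passive_state d (mix_t \<rho> t \<sigma>))}"

lemma ra_Sset: "robustness_activity d \<rho> = Inf (Sset d \<rho>)"
  unfolding robustness_activity_def Sset_def ..

lemma state_supp: "is_state d A \<Longrightarrow> \<not> (i < d \<and> j < d) \<Longrightarrow> A i j = 0"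
  unfolding is_state_def supported_def by blast

lemma state_herm: "is_state d A \<Longrightarrow> i < d \<Longrightarrow> j < d \<Longrightarrow> A i j = cnj (A j i)"
  unfolding is_state_def psd_def hermitian_def by blast

lemma dm1_in:
  assumes "1 \<le> d" "is_state d \<rho>"
  shows "real d - 1 \<in> Sset d \<rho>"
proof (cases "d = 1")
  case True
  have m: "mix_t \<rho> 0 \<rho> = \<rho>" unfolding mix_t_def by simp
  have "\<rho> i j = 0" if "i \<noteq> j" for i j
  proof -
    have "\<not> (i < d \<and> j < d)" using that True by auto
    then show ?thesis using state_supp[OF assms(2)] by blast
  qed
  moreover have "\<forall>i. Suc i < d \<longrightarrow> Re (\<rho> (Suc i) (Suc i)) \<le> Re (\<rho> i i)" using True by simp
  ultimately have pr: "passive_state d \<rho>" unfolding passive_state_def using assms(2) by blast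
  have "0 \<in> Sset d \<rho>" unfolding Sset_def
  proof (intro CollectI conjI exI[of _ \<rho>])
    show "passive_state d (mix_t \<rho> 0 \<rho>)" unfolding m by (rule pr)
  qed (use assms(2) in auto)
  then show ?thesis using True by simp
next
  case False
  then have d2: "real d - 1 > 0" using assms by simp
  define c where "c = real d - 1"
  define \<sigma> where "\<sigma> = (\<lambda>i j. if i < d \<and> j < d then ((if i = j then 1 else 0) - \<rho> i j) / complex_of_real c else 0)"
  have cp: "c > 0" using d2 c_def by simp
  have Qs: "Q d \<sigma> x = (1 / of_real c) * Q d (\<lambda>i j. if i = j then 1 else 0) x + (- 1 / of_real c) * Q d \<rho> x" for x
    unfolding Q_lin[symmetric]
  proof (rule Q_cong)
    fix i j assume "i < d" "j < d"
    then have "\<sigma> i j = ((if i = j then 1 else 0) - \<rho> i j) / complex_of_real c" by (simp add: \<sigma>_def)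
    also have "\<dots> = 1 / of_real c * (if i = j then 1 else 0) + (- 1 / of_real c) * \<rho> i j"
      by (simp add: diff_divide_distrib)
    finally show "\<sigma> i j = 1 / of_real c * (if i = j then 1 else 0) + (- 1 / of_real c) * \<rho> i j" .
  qed
  have psd: "0 \<le> Re (Q d \<sigma> x)" for x
  proof -
    have "Re (Q d \<sigma> x) = ((\<Sum>i<d. (cmod (x i))^2) - Re (Q d \<rho> x)) / c"
      unfolding Qs Q_id using cp by (simp add: diff_divide_distrib)
    then show ?thesis using state_Q_bound[OF assms(2), of x] cp by simp
  qed
  have herm: "hermitian d \<sigma>" unfolding hermitian_def
  proof (intro allI impI)
    fix i j assume ij: "i < d" "j < d"
    have h: "\<rho> i j = cnj (\<rho> j i)" using state_herm[OF assms(2) ij] .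
    show "\<sigma> i j = cnj (\<sigma> j i)" using ij unfolding \<sigma>_def h by auto
  qed
  have tr: "trace d \<sigma> = 1"
  proof -
    have "trace d \<sigma> = (\<Sum>i<d. (1 - \<rho> i i) / of_real c)" unfolding trace_def \<sigma>_def by simp
    also have "\<dots> = (of_nat d - trace d \<rho>) / of_real c" unfolding trace_def
      by (simp add: sum_divide_distrib[symmetric] sum_subtractf)
    also have "of_nat d - trace d \<rho> = complex_of_real c" using assms(2) unfolding is_state_def c_def by simp
    also have "complex_of_real c / complex_of_real c = 1" using cp by simp
    finally show ?thesis .
  qed
  have sup: "supported d \<sigma>" unfolding supported_def \<sigma>_def by auto
  have st: "is_state d \<sigma>" using sup herm tr psd unfolding is_state_def psd_def Q_def by blast
  have "mix_t \<rho> c \<sigma> = unif d"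
  proof (intro ext)
    fix i j
    show "mix_t \<rho> c \<sigma> i j = unif d i j"
    proof (cases "i < d \<and> j < d")
      case True
      have cz: "complex_of_real c \<noteq> 0" using cp by simp
      have "mix_t \<rho> c \<sigma> i j = (\<rho> i j + ((if i = j then 1 else 0) - \<rho> i j)) / complex_of_real (1 + c)"
        unfolding mix_t_def \<sigma>_def using True cz by simp
      also have "1 + c = real d" unfolding c_def by simp
      finally show ?thesis unfolding unif_def using True by simp
    next
      case False
      then show ?thesis unfolding mix_t_def \<sigma>_def unif_def using state_supp[OF assms(2) False] by auto
    qed
  qed
  then show ?thesis unfolding Sset_def using st unif_passive[OF assms(1)] cp c_def
    by (auto intro!: exI[of _ \<sigma>])
qed

lemma Sset_bdd: "bdd_below (Sset d \<rho>)"
  unfolding Sset_def bdd_below_def by auto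

lemma Sset_nonneg: "t \<in> Sset d \<rho> \<Longrightarrow> 0 \<le> t"
  unfolding Sset_def by auto

lemma Sset_ne: "1 \<le> d \<Longrightarrow> is_state d \<rho> \<Longrightarrow> Sset d \<rho> \<noteq> {}"
  using dm1_in by blast

lemma part1:
  assumes "1 \<le> d" "is_state d \<rho>"
  shows "0 \<le> robustness_activity d \<rho> \<and> robustness_activity d \<rho> \<le> real d - 1"
  unfolding ra_Sset
  using cInf_greatest[OF Sset_ne[OF assms], of 0] Sset_nonneg cInf_lower[OF dm1_in[OF assms] Sset_bdd]
  by auto

lemma passive_mono:
  assumes "passive_state d \<tau>" "i \<le> j" "j < d"
  shows "Re (\<tau> j j) \<le> Re (\<tau> i i)"
  using assms(2,3)
proof (induction j)
  case 0 then show ?case by simp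
next
  case (Suc j)
  show ?case
  proof (cases "i = Suc j")
    case False
    then have "i \<le> j" using Suc by simp
    then have "Re (\<tau> j j) \<le> Re (\<tau> i i)" using Suc by simp
    moreover have "Re (\<tau> (Suc j) (Suc j)) \<le> Re (\<tau> j j)" using assms(1) Suc(3) unfolding passive_state_def by blast
    ultimately show ?thesis by simp
  qed simp
qed

lemma mix_entry:
  assumes "0 \<le> t"
  shows "\<rho> i j + of_real t * \<sigma> i j = of_real (1 + t) * mix_t \<rho> t \<sigma> i j"
proof -
  have "1 + t \<noteq> 0" using assms by linarith
  then have "complex_of_real (1 + t) \<noteq> 0" by (metis of_real_eq_0_iff)
  then show ?thesis unfolding mix_t_def by simp
qed

lemma mix_entry_re:
  assumes "0 \<le> t"
  shows "Re (\<rho> i j) + t * Re (\<sigma> i j) = (1 + t) * Re (mix_t \<rho> t \<sigma> i j)"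
proof -
  have "Re (\<rho> i j + of_real t * \<sigma> i j) = Re (of_real (1 + t) * mix_t \<rho> t \<sigma> i j)"
    using mix_entry[OF assms] by metis
  then show ?thesis by simp
qed

lemma top_is_state:
  assumes "1 \<le> d"
  shows "is_state d (top_state d)"
proof -
  have Qt: "Q d (top_state d) x = cnj (x (d - 1)) * 1 * x (d - 1)" for x
  proof -
    have "Q d (top_state d) x = (\<Sum>i<d. \<Sum>j<d. if i = d - 1 \<and> j = d - 1 then cnj (x (d - 1)) * 1 * x (d - 1) else 0)"
      unfolding Q_def by (intro sum.cong refl) (auto simp: top_state_def)
    also have "\<dots> = (\<Sum>i<d. if i = d - 1 then cnj (x (d - 1)) * 1 * x (d - 1) else 0)"
    proof (intro sum.cong refl)
      fix i assume "i \<in> {..<d}"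
      show "(\<Sum>j<d. if i = d - 1 \<and> j = d - 1 then cnj (x (d - 1)) * 1 * x (d - 1) else 0)
          = (if i = d - 1 then cnj (x (d - 1)) * 1 * x (d - 1) else 0)"
        using assms by (cases "i = d - 1") auto
    qed
    also have "\<dots> = cnj (x (d - 1)) * 1 * x (d - 1)" using assms by simp
    finally show ?thesis .
  qed
  have "0 \<le> Re (Q d (top_state d) x)" for x unfolding Qt using cnj_mult_self[of "x (d - 1)"] by simp
  then show ?thesis unfolding is_state_def psd_def supported_def hermitian_def trace_def Q_def
    using assms by (auto simp: top_state_def)
qed

lemma top_lower:
  assumes "1 \<le> d" "t \<in> Sset d (top_state d)"
  shows "real d - 1 \<le> t"
proof -
  obtain \<sigma> where t0: "0 \<le> t" and st: "is_state d \<sigma>" and pa: "passive_state d (mix_t (top_state d) t \<sigma>)"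
    using assms(2) unfolding Sset_def by auto
  define \<tau> where "\<tau> = mix_t (top_state d) t \<sigma>"
  have dl: "d - 1 < d" using assms by simp
  have "(\<Sum>i<d. Re (\<tau> (d - 1) (d - 1))) \<le> (\<Sum>i<d. Re (\<tau> i i))"
    by (rule sum_mono) (use passive_mono[OF pa[folded \<tau>_def]] in auto)
  also have "\<dots> = 1" using state_trace_re pa unfolding \<tau>_def passive_state_def by blast
  finally have h1: "real d * Re (\<tau> (d - 1) (d - 1)) \<le> 1" by simp
  have "Re (top_state d (d - 1) (d - 1)) + t * Re (\<sigma> (d - 1) (d - 1)) = (1 + t) * Re (\<tau> (d - 1) (d - 1))"
    unfolding \<tau>_def by (rule mix_entry_re[OF t0])
  moreover have "0 \<le> Re (\<sigma> (d - 1) (d - 1))" using psd_diag(1)[OF state_psd[OF st] dl] .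
  moreover have "Re (top_state d (d - 1) (d - 1)) = 1" by (simp add: top_state_def)
  ultimately have "1 \<le> (1 + t) * Re (\<tau> (d - 1) (d - 1))" using mult_nonneg_nonneg[OF t0, of "Re (\<sigma> (d - 1) (d - 1))"]
    by linarith
  then have "real d \<le> real d * ((1 + t) * Re (\<tau> (d - 1) (d - 1)))" using assms by simp
  also have "\<dots> = (1 + t) * (real d * Re (\<tau> (d - 1) (d - 1)))" by simp
  also have "\<dots> \<le> (1 + t) * 1" using h1 t0 by (intro mult_left_mono) auto
  finally show ?thesis by simp
qed

lemma top_value:
  assumes "1 \<le> d"
  shows "robustness_activity d (top_state d) = real d - 1"
  using part1[OF assms top_is_state[OF assms]] unfolding ra_Sset
  using cInf_greatest[OF Sset_ne[OF assms top_is_state[OF assms]] top_lower[OF assms]]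
  by linarith

lemma passive_in:
  assumes "passive_state d \<rho>"
  shows "0 \<in> Sset d \<rho>"
proof -
  have m: "mix_t \<rho> 0 \<rho> = \<rho>" unfolding mix_t_def by simp
  show ?thesis unfolding Sset_def
  proof (intro CollectI conjI exI[of _ \<rho>])
    show "passive_state d (mix_t \<rho> 0 \<rho>)" unfolding m by (rule assms)
  qed (use assms in \<open>auto simp: passive_state_def\<close>)
qed

lemma part2:
  assumes "1 \<le> d" "is_state d \<rho>"
  shows "robustness_activity d \<rho> = 0 \<longleftrightarrow> passive_state d \<rho>"
proof
  assume "passive_state d \<rho>"
  then show "robustness_activity d \<rho> = 0"
    using part1[OF assms] cInf_lower[OF passive_in Sset_bdd] unfolding ra_Sset by fastforce
next
  assume z: "robustness_activity d \<rho> = 0"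
  have small: "\<exists>t\<in>Sset d \<rho>. t < e" if "e > 0" for e
    using cInf_lessD[OF Sset_ne[OF assms]] z that unfolding ra_Sset by auto
  have off: "\<rho> i j = 0" if ij: "i \<noteq> j" for i j
  proof (cases "i < d \<and> j < d")
    case False then show ?thesis using state_supp[OF assms(2)] by blast
  next
    case True
    have "cmod (\<rho> i j) \<le> 0 + e" if ep: "e > 0" for e
    proof -
      obtain t \<sigma> where te: "t < e" "0 \<le> t" and st: "is_state d \<sigma>" and pa: "passive_state d (mix_t \<rho> t \<sigma>)"
        using small[OF ep] unfolding Sset_def by auto
      have "mix_t \<rho> t \<sigma> i j = 0" using pa ij unfolding passive_state_def by blast
      then have "\<rho> i j = - (of_real t * \<sigma> i j)" using mix_entry[OF te(2), of \<rho> i j \<sigma>]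
        by (simp add: eq_neg_iff_add_eq_0)
      then have "cmod (\<rho> i j) = t * cmod (\<sigma> i j)" using te by (simp add: norm_mult)
      also have "\<dots> \<le> t * 1" using state_entry_le1[OF st] True te by (intro mult_left_mono) auto
      finally show ?thesis using te by simp
    qed
    then have "cmod (\<rho> i j) \<le> 0" by (rule field_le_epsilon)
    then show ?thesis by simp
  qed
  have ord: "Re (\<rho> (Suc i) (Suc i)) \<le> Re (\<rho> i i)" if si: "Suc i < d" for i
  proof (rule field_le_epsilon)
    fix e :: real assume "e > 0"
    obtain t \<sigma> where te: "t < e" "0 \<le> t" and st: "is_state d \<sigma>" and pa: "passive_state d (mix_t \<rho> t \<sigma>)"
      using small[OF \<open>e > 0\<close>] unfolding Sset_def by auto
    have "Re (mix_t \<rho> t \<sigma> (Suc i) (Suc i)) \<le> Re (mix_t \<rho> t \<sigma> i i)" using pa si unfolding passive_state_def by blast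
    then have "(1 + t) * Re (mix_t \<rho> t \<sigma> (Suc i) (Suc i)) \<le> (1 + t) * Re (mix_t \<rho> t \<sigma> i i)"
      using te by (intro mult_left_mono) auto
    then have "Re (\<rho> (Suc i) (Suc i)) + t * Re (\<sigma> (Suc i) (Suc i)) \<le> Re (\<rho> i i) + t * Re (\<sigma> i i)"
      unfolding mix_entry_re[OF te(2), symmetric] .
    moreover have "0 \<le> Re (\<sigma> (Suc i) (Suc i))" using psd_diag(1)[OF state_psd[OF st] si] .
    moreover have "Re (\<sigma> i i) \<le> 1" using state_diag_le1[OF st] si by simp
    moreover have "t * Re (\<sigma> i i) \<le> t * 1" using \<open>Re (\<sigma> i i) \<le> 1\<close> te(2) by (rule mult_left_mono)
    moreover have "0 \<le> t * Re (\<sigma> (Suc i) (Suc i))" using te(2) \<open>0 \<le> Re (\<sigma> (Suc i) (Suc i))\<close> by (rule mult_nonneg_nonneg)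
    ultimately have "Re (\<rho> (Suc i) (Suc i)) \<le> Re (\<rho> i i) + t" by linarith
    then show "Re (\<rho> (Suc i) (Suc i)) \<le> Re (\<rho> i i) + e" using te by simp
  qed
  show "passive_state d \<rho>" unfolding passive_state_def using assms(2) off ord by blast
qed

lemma state_cc:
  assumes "is_state d A" "is_state d B" "0 \<le> a" "0 \<le> b" "a + b = 1"
  shows "is_state d (\<lambda>i j. complex_of_real a * A i j + complex_of_real b * B i j)"
proof -
  let ?M = "\<lambda>i j. complex_of_real a * A i j + complex_of_real b * B i j"
  have sup: "supported d ?M" using state_supp[OF assms(1)] state_supp[OF assms(2)]
    unfolding supported_def by simp
  have her: "hermitian d ?M" unfolding hermitian_def
  proof (intro allI impI)
    fix i j assume ij: "i < d" "j < d"
    have h1: "A i j = cnj (A j i)" using state_herm[OF assms(1) ij] .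
    have h2: "B i j = cnj (B j i)" using state_herm[OF assms(2) ij] .
    show "?M i j = cnj (?M j i)" unfolding h1 h2 by simp
  qed
  have "0 \<le> Re (Q d ?M x)" for x
  proof -
    have "Re (Q d ?M x) = a * Re (Q d A x) + b * Re (Q d B x)" unfolding Q_lin by simp
    then show ?thesis using psd_Q[OF state_psd[OF assms(1)], of x] psd_Q[OF state_psd[OF assms(2)], of x] assms(3,4)
      by simp
  qed
  moreover have "trace d ?M = 1"
  proof -
    have "trace d ?M = of_real a * trace d A + of_real b * trace d B"
      unfolding trace_def by (simp add: sum.distrib sum_distrib_left)
    also have "\<dots> = of_real (a + b)" using assms(1,2) unfolding is_state_def by simp
    finally show ?thesis using assms(5) by simp
  qed
  ultimately show ?thesis using sup her unfolding is_state_def psd_def Q_def by blast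
qed

lemma passive_cc:
  assumes "passive_state d A" "passive_state d B" "0 \<le> a" "0 \<le> b" "a + b = 1"
  shows "passive_state d (\<lambda>i j. complex_of_real a * A i j + complex_of_real b * B i j)"
proof -
  have s: "is_state d (\<lambda>i j. complex_of_real a * A i j + complex_of_real b * B i j)"
    using assms state_cc unfolding passive_state_def by blast
  have o: "\<forall>i j. i \<noteq> j \<longrightarrow> complex_of_real a * A i j + complex_of_real b * B i j = 0"
    using assms(1,2) unfolding passive_state_def by simp
  have "Re (complex_of_real a * A (Suc i) (Suc i) + complex_of_real b * B (Suc i) (Suc i))
     \<le> Re (complex_of_real a * A i i + complex_of_real b * B i i)" if "Suc i < d" for i
  proof -
    have "Re (A (Suc i) (Suc i)) \<le> Re (A i i)" "Re (B (Suc i) (Suc i)) \<le> Re (B i i)"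
      using assms(1,2) that unfolding passive_state_def by blast+
    then have "a * Re (A (Suc i) (Suc i)) + b * Re (B (Suc i) (Suc i)) \<le> a * Re (A i i) + b * Re (B i i)"
      using assms(3,4) by (intro add_mono mult_left_mono) auto
    then show ?thesis by simp
  qed
  then show ?thesis using s o unfolding passive_state_def by blast
qed

lemma conv_in:
  assumes "t1 \<in> Sset d \<rho>1" "t2 \<in> Sset d \<rho>2" "0 \<le> p" "p \<le> 1"
  shows "p * t1 + (1 - p) * t2 \<in> Sset d (\<lambda>i j. complex_of_real p * \<rho>1 i j + complex_of_real (1 - p) * \<rho>2 i j)"
proof -
  obtain \<sigma>1 where t1: "0 \<le> t1" and s1: "is_state d \<sigma>1" and p1: "passive_state d (mix_t \<rho>1 t1 \<sigma>1)"
    using assms(1) unfolding Sset_def by auto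
  obtain \<sigma>2 where t2: "0 \<le> t2" and s2: "is_state d \<sigma>2" and p2: "passive_state d (mix_t \<rho>2 t2 \<sigma>2)"
    using assms(2) unfolding Sset_def by auto
  define t where "t = p * t1 + (1 - p) * t2"
  define \<rho> where "\<rho> = (\<lambda>i j. complex_of_real p * \<rho>1 i j + complex_of_real (1 - p) * \<rho>2 i j)"
  have a0: "0 \<le> p * t1" "0 \<le> (1 - p) * t2" using assms t1 t2 by auto
  have t0: "0 \<le> t" unfolding t_def using a0 by simp
  obtain \<sigma> where s: "is_state d \<sigma>"
    and se: "\<And>i j. complex_of_real t * \<sigma> i j = complex_of_real (p * t1) * \<sigma>1 i j + complex_of_real ((1 - p) * t2) * \<sigma>2 i j"
  proof (cases "t = 0")
    case True
    have h1: "p * t1 = 0" and h2: "(1 - p) * t2 = 0" using a0 True unfolding t_def by linarith+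
    show ?thesis by (rule that[OF s1]) (simp only: h1 h2 True of_real_0 mult_zero_left add_0)
  next
    case False
    then have tp: "t > 0" using t0 by simp
    define \<sigma> where "\<sigma> = (\<lambda>i j. complex_of_real (p * t1 / t) * \<sigma>1 i j + complex_of_real ((1 - p) * t2 / t) * \<sigma>2 i j)"
    have ws: "p * t1 / t + (1 - p) * t2 / t = 1"
    proof -
      have "p * t1 / t + (1 - p) * t2 / t = (p * t1 + (1 - p) * t2) / t" by (simp only: add_divide_distrib)
      also have "\<dots> = 1" using tp unfolding t_def[symmetric] by simp
      finally show ?thesis .
    qed
    have "is_state d \<sigma>" unfolding \<sigma>_def
      by (rule state_cc[OF s1 s2 _ _ ws]) (use a0 tp in auto)
    moreover have "complex_of_real t * \<sigma> i j = complex_of_real (p * t1) * \<sigma>1 i j + complex_of_real ((1 - p) * t2) * \<sigma>2 i j" for i j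
    proof -
      have "complex_of_real t * \<sigma> i j = complex_of_real (t * (p * t1 / t)) * \<sigma>1 i j + complex_of_real (t * ((1 - p) * t2 / t)) * \<sigma>2 i j"
        unfolding \<sigma>_def by (simp add: algebra_simps)
      then show ?thesis using tp by simp
    qed
    ultimately show ?thesis using that by blast
  qed
  define w1 where "w1 = p * (1 + t1) / (1 + t)"
  define w2 where "w2 = (1 - p) * (1 + t2) / (1 + t)"
  have w12: "w1 + w2 = 1"
  proof -
    have n: "p * (1 + t1) + (1 - p) * (1 + t2) = 1 + t" unfolding t_def by (simp add: algebra_simps)
    have "w1 + w2 = (p * (1 + t1) + (1 - p) * (1 + t2)) / (1 + t)" unfolding w1_def w2_def by (simp only: add_divide_distrib)
    also have "\<dots> = 1" unfolding n using t0 by simp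
    finally show ?thesis .
  qed
  have w: "0 \<le> w1" "0 \<le> w2" "w1 + w2 = 1" unfolding w1_def w2_def using assms t1 t2 t0 w12
    by (auto simp: w1_def w2_def)
  have "mix_t \<rho> t \<sigma> = (\<lambda>i j. complex_of_real w1 * mix_t \<rho>1 t1 \<sigma>1 i j + complex_of_real w2 * mix_t \<rho>2 t2 \<sigma>2 i j)"
  proof (intro ext)
    fix i j
    have e1: "of_real (1 + t1) * mix_t \<rho>1 t1 \<sigma>1 i j = \<rho>1 i j + of_real t1 * \<sigma>1 i j"
      using mix_entry[OF t1] by metis
    have e2: "of_real (1 + t2) * mix_t \<rho>2 t2 \<sigma>2 i j = \<rho>2 i j + of_real t2 * \<sigma>2 i j"
      using mix_entry[OF t2] by metis
    have "1 + t \<noteq> 0" using t0 by linarith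
    then have nz: "complex_of_real (1 + t) \<noteq> 0" by (metis of_real_eq_0_iff)
    have "complex_of_real w1 * mix_t \<rho>1 t1 \<sigma>1 i j + complex_of_real w2 * mix_t \<rho>2 t2 \<sigma>2 i j
       = (of_real p * (of_real (1 + t1) * mix_t \<rho>1 t1 \<sigma>1 i j) + of_real (1 - p) * (of_real (1 + t2) * mix_t \<rho>2 t2 \<sigma>2 i j)) / of_real (1 + t)"
      unfolding w1_def w2_def using nz by (simp add: divide_simps)
    also have "\<dots> = (\<rho> i j + (complex_of_real (p * t1) * \<sigma>1 i j + complex_of_real ((1 - p) * t2) * \<sigma>2 i j)) / of_real (1 + t)"
      unfolding e1 e2 \<rho>_def by (simp add: algebra_simps)
    also have "\<dots> = mix_t \<rho> t \<sigma> i j" unfolding mix_t_def se[symmetric] ..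
    finally show "mix_t \<rho> t \<sigma> i j = complex_of_real w1 * mix_t \<rho>1 t1 \<sigma>1 i j + complex_of_real w2 * mix_t \<rho>2 t2 \<sigma>2 i j" ..
  qed
  then have "passive_state d (mix_t \<rho> t \<sigma>)" using passive_cc[OF p1 p2 w] by simp
  then show ?thesis unfolding Sset_def t_def[symmetric] \<rho>_def[symmetric] using s t0 by blast
qed

lemma part3:
  assumes "1 \<le> d" "0 \<le> p" "p \<le> 1" "is_state d \<rho>1" "is_state d \<rho>2"
  shows "robustness_activity d (\<lambda>i j. complex_of_real p * \<rho>1 i j + complex_of_real (1 - p) * \<rho>2 i j)
              \<le> p * robustness_activity d \<rho>1 + (1 - p) * robustness_activity d \<rho>2"
  unfolding ra_Sset
proof (rule field_le_epsilon)
  fix e :: real assume e: "0 < e"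
  obtain t1 where t1: "t1 \<in> Sset d \<rho>1" "t1 < Inf (Sset d \<rho>1) + e"
    using cInf_lessD[OF Sset_ne[OF assms(1,4)], of "Inf (Sset d \<rho>1) + e"] e by auto
  obtain t2 where t2: "t2 \<in> Sset d \<rho>2" "t2 < Inf (Sset d \<rho>2) + e"
    using cInf_lessD[OF Sset_ne[OF assms(1,5)], of "Inf (Sset d \<rho>2) + e"] e by auto
  have "Inf (Sset d (\<lambda>i j. complex_of_real p * \<rho>1 i j + complex_of_real (1 - p) * \<rho>2 i j)) \<le> p * t1 + (1 - p) * t2"
    by (rule cInf_lower[OF conv_in[OF t1(1) t2(1) assms(2,3)] Sset_bdd])
  also have "\<dots> \<le> p * (Inf (Sset d \<rho>1) + e) + (1 - p) * (Inf (Sset d \<rho>2) + e)"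
    using t1 t2 assms(2,3) by (intro add_mono mult_left_mono) auto
  also have "\<dots> = p * Inf (Sset d \<rho>1) + (1 - p) * Inf (Sset d \<rho>2) + e" by (simp add: algebra_simps)
  finally show "Inf (Sset d (\<lambda>i j. complex_of_real p * \<rho>1 i j + complex_of_real (1 - p) * \<rho>2 i j))
     \<le> p * Inf (Sset d \<rho>1) + (1 - p) * Inf (Sset d \<rho>2) + e" .
qed

lemma swap_in1: "(\<Sum>i\<in>A. \<Sum>j\<in>B. \<Sum>k\<in>C. f i j k) = (\<Sum>i\<in>A. \<Sum>k\<in>C. \<Sum>j\<in>B. f i j k)"
  by (rule sum.cong[OF refl], rule sum.swap)

lemma swap_in2: "(\<Sum>h\<in>H. \<Sum>i\<in>A. \<Sum>j\<in>B. \<Sum>k\<in>C. f h i j k) = (\<Sum>h\<in>H. \<Sum>i\<in>A. \<Sum>k\<in>C. \<Sum>j\<in>B. f h i j k)"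
  by (rule sum.cong[OF refl], rule swap_in1)

lemma swap4: "(\<Sum>i\<in>A. \<Sum>j\<in>B. \<Sum>l\<in>C. \<Sum>m\<in>D. G i j l m) = (\<Sum>l\<in>C. \<Sum>m\<in>D. \<Sum>i\<in>A. \<Sum>j\<in>B. G i j l m)"
proof -
  have "(\<Sum>i\<in>A. \<Sum>j\<in>B. \<Sum>l\<in>C. \<Sum>m\<in>D. G i j l m) = (\<Sum>i\<in>A. \<Sum>l\<in>C. \<Sum>j\<in>B. \<Sum>m\<in>D. G i j l m)"
    by (rule swap_in1)
  also have "\<dots> = (\<Sum>l\<in>C. \<Sum>i\<in>A. \<Sum>j\<in>B. \<Sum>m\<in>D. G i j l m)" by (rule sum.swap)
  also have "\<dots> = (\<Sum>l\<in>C. \<Sum>i\<in>A. \<Sum>m\<in>D. \<Sum>j\<in>B. G i j l m)" by (rule swap_in2)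
  also have "\<dots> = (\<Sum>l\<in>C. \<Sum>m\<in>D. \<Sum>i\<in>A. \<Sum>j\<in>B. G i j l m)" by (rule sum.cong[OF refl], rule sum.swap)
  finally show ?thesis .
qed

lemma swap5: "(\<Sum>i\<in>A. \<Sum>j\<in>A. \<Sum>k\<in>B. \<Sum>l\<in>A. \<Sum>m\<in>A. F i j k l m) = (\<Sum>k\<in>B. \<Sum>l\<in>A. \<Sum>m\<in>A. \<Sum>i\<in>A. \<Sum>j\<in>A. F i j k l m)"
proof -
  have "(\<Sum>i\<in>A. \<Sum>j\<in>A. \<Sum>k\<in>B. \<Sum>l\<in>A. \<Sum>m\<in>A. F i j k l m) = (\<Sum>i\<in>A. \<Sum>k\<in>B. \<Sum>j\<in>A. \<Sum>l\<in>A. \<Sum>m\<in>A. F i j k l m)"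
    by (rule swap_in1)
  also have "\<dots> = (\<Sum>k\<in>B. \<Sum>i\<in>A. \<Sum>j\<in>A. \<Sum>l\<in>A. \<Sum>m\<in>A. F i j k l m)" by (rule sum.swap)
  also have "\<dots> = (\<Sum>k\<in>B. \<Sum>l\<in>A. \<Sum>m\<in>A. \<Sum>i\<in>A. \<Sum>j\<in>A. F i j k l m)" by (rule sum.cong[OF refl], rule swap4)
  finally show ?thesis .
qed

lemma swap_tr: "(\<Sum>i\<in>A. \<Sum>k\<in>B. \<Sum>l\<in>C. \<Sum>m\<in>D. F i k l m) = (\<Sum>l\<in>C. \<Sum>m\<in>D. \<Sum>k\<in>B. \<Sum>i\<in>A. F i k l m)"
proof -
  have "(\<Sum>i\<in>A. \<Sum>k\<in>B. \<Sum>l\<in>C. \<Sum>m\<in>D. F i k l m) = (\<Sum>k\<in>B. \<Sum>i\<in>A. \<Sum>l\<in>C. \<Sum>m\<in>D. F i k l m)"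
    by (rule sum.swap)
  also have "\<dots> = (\<Sum>k\<in>B. \<Sum>l\<in>C. \<Sum>i\<in>A. \<Sum>m\<in>D. F i k l m)" by (rule sum.cong[OF refl], rule sum.swap)
  also have "\<dots> = (\<Sum>k\<in>B. \<Sum>l\<in>C. \<Sum>m\<in>D. \<Sum>i\<in>A. F i k l m)" by (rule swap_in2)
  also have "\<dots> = (\<Sum>l\<in>C. \<Sum>k\<in>B. \<Sum>m\<in>D. \<Sum>i\<in>A. F i k l m)" by (rule sum.swap)
  also have "\<dots> = (\<Sum>l\<in>C. \<Sum>m\<in>D. \<Sum>k\<in>B. \<Sum>i\<in>A. F i k l m)" by (rule swap_in1)
  finally show ?thesis .
qed

lemma prod_sums: "(sum a I) * (c::complex) * (sum b J) = (\<Sum>i\<in>I. \<Sum>j\<in>J. a i * c * b j)"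
  by (simp add: sum_distrib_left sum_distrib_right mult.assoc) (rule sum.swap)

lemma chan_psd:
  fixes K :: "nat \<Rightarrow> cmat"
  assumes cf: "\<And>A i j. C A i j = (if i < d \<and> j < d then (\<Sum>k<n. \<Sum>l<d. \<Sum>m<d. K k i l * A l m * cnj (K k j m)) else 0)"
    and ps: "psd d A"
  shows "0 \<le> Re (Q d (C A) x)"
proof -
  define y where "y = (\<lambda>k m. \<Sum>j<d. cnj (K k j m) * x j)"
  have "Q d (C A) x = (\<Sum>i<d. \<Sum>j<d. \<Sum>k<n. \<Sum>l<d. \<Sum>m<d. cnj (x i) * K k i l * A l m * cnj (K k j m) * x j)"
    unfolding Q_def
  proof (intro sum.cong refl)
    fix i j assume "i \<in> {..<d}" "j \<in> {..<d}"
    then have "C A i j = (\<Sum>k<n. \<Sum>l<d. \<Sum>m<d. K k i l * A l m * cnj (K k j m))" using cf by simp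
    then show "cnj (x i) * C A i j * x j = (\<Sum>k<n. \<Sum>l<d. \<Sum>m<d. cnj (x i) * K k i l * A l m * cnj (K k j m) * x j)"
      by (simp add: sum_distrib_left sum_distrib_right mult.assoc)
  qed
  also have "\<dots> = (\<Sum>k<n. \<Sum>l<d. \<Sum>m<d. \<Sum>i<d. \<Sum>j<d. cnj (x i) * K k i l * A l m * cnj (K k j m) * x j)"
    by (rule swap5)
  also have "\<dots> = (\<Sum>k<n. Q d A (y k))"
    unfolding Q_def
  proof (intro sum.cong refl)
    fix k l m
    have "cnj (y k l) * A l m * y k m = (\<Sum>i<d. K k i l * cnj (x i)) * A l m * (\<Sum>j<d. cnj (K k j m) * x j)"
      unfolding y_def by simp
    also have "\<dots> = (\<Sum>i<d. \<Sum>j<d. K k i l * cnj (x i) * A l m * (cnj (K k j m) * x j))" by (rule prod_sums)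
    finally show "(\<Sum>i<d. \<Sum>j<d. cnj (x i) * K k i l * A l m * cnj (K k j m) * x j) = cnj (y k l) * A l m * y k m"
      by (simp add: ac_simps)
  qed
  finally have "Re (Q d (C A) x) = (\<Sum>k<n. Re (Q d A (y k)))" by simp
  also have "\<dots> \<ge> 0" using psd_Q[OF ps] by (intro sum_nonneg) auto
  finally show ?thesis by simp
qed

lemma chan_herm:
  fixes K :: "nat \<Rightarrow> cmat"
  assumes cf: "\<And>A i j. C A i j = (if i < d \<and> j < d then (\<Sum>k<n. \<Sum>l<d. \<Sum>m<d. K k i l * A l m * cnj (K k j m)) else 0)"
    and h: "hermitian d A"
  shows "hermitian d (C A)"
  unfolding hermitian_def
proof (intro allI impI)
  fix i j assume ij: "i < d" "j < d"
  have "cnj (C A j i) = (\<Sum>k<n. \<Sum>l<d. \<Sum>m<d. cnj (K k j l) * cnj (A l m) * K k i m)"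
    using ij cf by simp
  also have "\<dots> = (\<Sum>k<n. \<Sum>l<d. \<Sum>m<d. cnj (K k j l) * A m l * K k i m)"
  proof (intro sum.cong refl)
    fix k l m assume "l \<in> {..<d}" "m \<in> {..<d}"
    then have "A m l = cnj (A l m)" using h unfolding hermitian_def by blast
    then show "cnj (K k j l) * cnj (A l m) * K k i m = cnj (K k j l) * A m l * K k i m" by simp
  qed
  also have "\<dots> = (\<Sum>k<n. \<Sum>m<d. \<Sum>l<d. cnj (K k j l) * A m l * K k i m)" by (rule swap_in1)
  also have "\<dots> = C A i j" using ij cf by (simp add: ac_simps)
  finally show "C A i j = cnj (C A j i)" by simp
qed

lemma chan_trace:
  fixes K :: "nat \<Rightarrow> cmat"
  assumes cf: "\<And>A i j. C A i j = (if i < d \<and> j < d then (\<Sum>k<n. \<Sum>l<d. \<Sum>m<d. K k i l * A l m * cnj (K k j m)) else 0)"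
    and tp: "\<forall>i<d. \<forall>j<d. (\<Sum>k<n. \<Sum>l<d. cnj (K k l i) * K k l j) = (if i = j then 1 else 0)"
  shows "trace d (C A) = trace d A"
proof -
  have "trace d (C A) = (\<Sum>i<d. \<Sum>k<n. \<Sum>l<d. \<Sum>m<d. K k i l * A l m * cnj (K k i m))"
    unfolding trace_def using cf by simp
  also have "\<dots> = (\<Sum>l<d. \<Sum>m<d. \<Sum>k<n. \<Sum>i<d. K k i l * A l m * cnj (K k i m))" by (rule swap_tr)
  also have "\<dots> = (\<Sum>l<d. \<Sum>m<d. A l m * (if m = l then 1 else 0))"
  proof (intro sum.cong refl)
    fix l m assume lm: "l \<in> {..<d}" "m \<in> {..<d}"
    have "(\<Sum>k<n. \<Sum>i<d. K k i l * A l m * cnj (K k i m)) = A l m * (\<Sum>k<n. \<Sum>i<d. cnj (K k i m) * K k i l)"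
      by (simp add: sum_distrib_left ac_simps)
    also have "\<dots> = A l m * (if m = l then 1 else 0)" using tp lm by simp
    finally show "(\<Sum>k<n. \<Sum>i<d. K k i l * A l m * cnj (K k i m)) = A l m * (if m = l then 1 else 0)" .
  qed
  also have "\<dots> = (\<Sum>l<d. A l l)" by (simp add: if_distrib cong: if_cong)
  finally show ?thesis unfolding trace_def .
qed

lemma chan_state:
  fixes K :: "nat \<Rightarrow> cmat"
  assumes cf: "\<And>A i j. C A i j = (if i < d \<and> j < d then (\<Sum>k<n. \<Sum>l<d. \<Sum>m<d. K k i l * A l m * cnj (K k j m)) else 0)"
    and tp: "\<forall>i<d. \<forall>j<d. (\<Sum>k<n. \<Sum>l<d. cnj (K k l i) * K k l j) = (if i = j then 1 else 0)"
    and st: "is_state d A"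
  shows "is_state d (C A)"
proof -
  have "supported d (C A)" unfolding supported_def using cf by simp
  moreover have "hermitian d (C A)" using chan_herm[OF cf] st unfolding is_state_def psd_def by blast
  moreover have "0 \<le> Re (Q d (C A) x)" for x using chan_psd[OF cf state_psd[OF st]] .
  moreover have "trace d (C A) = 1" using chan_trace[OF cf tp] st unfolding is_state_def by simp
  ultimately show ?thesis unfolding is_state_def psd_def Q_def by blast
qed

lemma chan_mix:
  fixes K :: "nat \<Rightarrow> cmat"
  assumes cf: "\<And>A i j. C A i j = (if i < d \<and> j < d then (\<Sum>k<n. \<Sum>l<d. \<Sum>m<d. K k i l * A l m * cnj (K k j m)) else 0)"
  shows "C (mix_t \<rho> t \<sigma>) = mix_t (C \<rho>) t (C \<sigma>)"
proof (intro ext)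
  fix i j
  show "C (mix_t \<rho> t \<sigma>) i j = mix_t (C \<rho>) t (C \<sigma>) i j"
    unfolding cf mix_t_def
    by (simp add: sum_divide_distrib[symmetric] sum.distrib sum_distrib_left add_divide_distrib ring_distribs ac_simps)
qed

lemma part4:
  assumes "channel d C" "passivity_preserving d C" "is_state d \<rho>" "1 \<le> d"
  shows "robustness_activity d (C \<rho>) \<le> robustness_activity d \<rho>"
proof -
  obtain n and K :: "nat \<Rightarrow> cmat" where
    tp: "\<forall>i<d. \<forall>j<d. (\<Sum>k<n. \<Sum>l<d. cnj (K k l i) * K k l j) = (if i = j then 1 else 0)" and
    cf0: "\<forall>A i j. C A i j = (if i < d \<and> j < d then (\<Sum>k<n. \<Sum>l<d. \<Sum>m<d. K k i l * A l m * cnj (K k j m)) else 0)"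
    using assms(1) unfolding channel_def by blast
  have cf: "\<And>A i j. C A i j = (if i < d \<and> j < d then (\<Sum>k<n. \<Sum>l<d. \<Sum>m<d. K k i l * A l m * cnj (K k j m)) else 0)"
    using cf0 by blast
  have sub: "Sset d \<rho> \<subseteq> Sset d (C \<rho>)"
  proof
    fix t assume "t \<in> Sset d \<rho>"
    then obtain \<sigma> where t0: "0 \<le> t" and s: "is_state d \<sigma>" and p: "passive_state d (mix_t \<rho> t \<sigma>)"
      unfolding Sset_def by auto
    have "passive_state d (mix_t (C \<rho>) t (C \<sigma>))"
      using assms(2) p unfolding passivity_preserving_def chan_mix[OF cf, symmetric] by blast
    then show "t \<in> Sset d (C \<rho>)" unfolding Sset_def using t0 chan_state[OF cf tp s] by blast
  qed
  show ?thesis unfolding ra_Sset by (rule cInf_superset_mono[OF Sset_ne[OF assms(4,3)] Sset_bdd sub])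
qed


theorem mainTheorem9:
  fixes d :: nat
  assumes "1 \<le> d"
  shows "(\<forall>\<rho>. is_state d \<rho> \<longrightarrow>
            0 \<le> robustness_activity d \<rho> \<and> robustness_activity d \<rho> \<le> real d - 1)
       \<and> is_state d (top_state d) \<and> robustness_activity d (top_state d) = real d - 1
       \<and> (\<forall>\<rho>. is_state d \<rho> \<longrightarrow> (robustness_activity d \<rho> = 0 \<longleftrightarrow> passive_state d \<rho>))
       \<and> (\<forall>p \<rho>1 \<rho>2. 0 \<le> p \<and> p \<le> 1 \<and> is_state d \<rho>1 \<and> is_state d \<rho>2 \<longrightarrow>
            robustness_activity d (\<lambda>i j. complex_of_real p * \<rho>1 i j + complex_of_real (1 - p) * \<rho>2 i j)
              \<le> p * robustness_activity d \<rho>1 + (1 - p) * robustness_activity d \<rho>2)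
       \<and> (\<forall>C \<rho>. channel d C \<and> passivity_preserving d C \<and> is_state d \<rho> \<longrightarrow>
            robustness_activity d (C \<rho>) \<le> robustness_activity d \<rho>)"
  using part1[OF assms] top_is_state[OF assms] top_value[OF assms] part2[OF assms]
    part3[OF assms] part4[OF _ _ _ assms] by blast

end
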